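(* Let $a>1$ and $c>0$. There is a constant $C=C(c,a)>0$ such that $$\sup_{B(0,1)} f\ge -C$$ for every $f\in\mathcal{R}_a$.
   Context: $\mathbb{R}^n$ is identified with the real points of $\mathbb{C}^n$; $B(0,1)$ is the unit Euclidean ball of $\mathbb{R}^n$ and $B_c(0,\rho)$ the Euclidean ball of radius $\rho$ in $\mathbb{C}^n$. $\mathcal{R}_a$ (depending on $a$ and the constant $c$) is the family of continuous plurisubharmonic functions $f:B_c(0,a)\to\mathbb{R}$ satisfying $\sup_{B_c(0,a)}f=0$ and $\sup_{B_c(0,1)}f\ge -c\log a$. *)

theory Defs
  imports "HOL-Analysis.Analysis"
begin

text \<open>A continuous (hence upper semicontinuous) f is plurisubharmonic iff it satisfies the
  sub-mean value inequality on every closed complex disc z + D w contained in the domain.\<close>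
definition cont_psh_on :: "(complex^'n) set \<Rightarrow> (complex^'n \<Rightarrow> real) \<Rightarrow> bool" where
  "cont_psh_on \<Omega> f \<longleftrightarrow> open \<Omega> \<and> continuous_on \<Omega> f \<and>
     (\<forall>z w. (\<forall>u::complex. norm u \<le> 1 \<longrightarrow> z + u *s w \<in> \<Omega>) \<longrightarrow>
        f z \<le> integral {0..2*pi} (\<lambda>t. f (z + exp (\<i> * of_real t) *s w)) / (2*pi))"

definition real_points :: "(complex^'n) set" where
  "real_points = {x. \<forall>i. Im (x $ i) = 0}"

definition R_family :: "real \<Rightarrow> real \<Rightarrow> (complex^'n \<Rightarrow> real) set" where
  "R_family c a = {f. cont_psh_on (ball 0 a) f
      \<and> (SUP z\<in>ball 0 a. ereal (f z)) = 0
      \<and> (SUP z\<in>ball 0 1. ereal (f z)) \<ge> ereal (- c * ln a)}"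

end

theory Submission
  imports Defs "HOL-Complex_Analysis.Complex_Analysis"
begin



lemma mean_value_holo:
  assumes h: "h holomorphic_on cball z r" and r: "r > 0"
  shows "((\<lambda>t. h (z + of_real r * exp(\<i> * of_real t))) has_integral (2*pi) *\<^sub>R h z) {0..2*pi}"
proof -
  have "((\<lambda>u. h u/(u-z)) has_contour_integral (2 * of_real pi * \<i> * h z)) (circlepath z r)"
    using Cauchy_integral_circlepath_simple[OF h] r by simp
  then have 1: "((\<lambda>x. h (circlepath z r x)/(circlepath z r x - z) * vector_derivative (circlepath z r) (at x within {0..1}))
     has_integral (2 * of_real pi * \<i> * h z)) {0..1}"
    by (simp add: has_contour_integral_def)
  have 2: "((\<lambda>x. (2 * of_real pi * \<i>) * h (z + of_real r * exp(\<i> * of_real (2*pi*x))))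
     has_integral (2 * of_real pi * \<i> * h z)) {0..1}"
  proof (rule has_integral_eq[OF _ 1])
    fix x :: real assume x: "x \<in> {0..1}"
    have e: "exp (2 * of_real pi * \<i> * of_real x) \<noteq> 0" by simp
    show "h (circlepath z r x)/(circlepath z r x - z) * vector_derivative (circlepath z r) (at x within {0..1})
       = (2 * of_real pi * \<i>) * h (z + of_real r * exp(\<i> * of_real (2*pi*x)))"
    proof -
      have vd: "vector_derivative (circlepath z r) (at x within {0..1}) = 2 * pi * \<i> * r * exp(2 * of_real pi * \<i> * x)"
        using x by (simp add: vector_derivative_circlepath01)
      have cp: "circlepath z r x = z + of_real r * exp(\<i> * of_real (2*pi*x))"
        by (simp add: circlepath mult_ac)
      have ee: "exp(2 * of_real pi * \<i> * x) = exp(\<i> * of_real (2*pi*x))"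
        by (simp add: mult_ac)
      have "exp(\<i> * of_real (2*pi*x)) \<noteq> 0" by simp
      then show ?thesis unfolding vd cp ee using r by (simp add: field_simps)
    qed
  qed
  have 3: "((\<lambda>x. h (z + of_real r * exp(\<i> * of_real (2*pi*x)))) has_integral h z) {0..1}"
    using has_integral_mult_right_iff[of "2 * of_real pi * \<i>" "\<lambda>x. h (z + of_real r * exp(\<i> * of_real (2*pi*x)))" "2 * of_real pi * \<i> * h z" "{0..1::real}"] 2
    by simp
  have img: "(\<lambda>x. x / (2*pi)) ` {0..2*pi} = {0..1::real}"
  proof -
    have "(\<lambda>x. x / (2*pi)) ` {0..2*pi} = {0/(2*pi)..(2*pi)/(2*pi)}"
      by (rule image_divide_atLeastAtMost) simp
    then show ?thesis by simp
  qed
  have "2 * pi \<noteq> (0::real)" by simp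
  from has_integral_stretch_real_iff[OF this, of "\<lambda>t. h (z + of_real r * exp(\<i> * of_real t))" "h z" 0 "2*pi"] 3 img
  show ?thesis by simp
qed



lemma max_principle:
  fixes w :: "complex \<Rightarrow> real" and \<Omega> :: "complex set"
  assumes op: "open \<Omega>" and bdd: "bounded \<Omega>" and cw: "continuous_on \<Omega> w"
    and bd: "\<And>\<xi> \<epsilon>. \<xi> \<in> frontier \<Omega> \<Longrightarrow> \<epsilon> > 0 \<Longrightarrow> \<exists>d>0. \<forall>z\<in>\<Omega>. dist z \<xi> < d \<longrightarrow> w z < \<epsilon>"
    and sm: "\<And>z. z \<in> \<Omega> \<Longrightarrow> \<exists>r0>0. cball z r0 \<subseteq> \<Omega> \<and> (\<forall>\<rho>. 0 < \<rho> \<and> \<rho> < r0 \<longrightarrow>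
         w z \<le> integral {0..2*pi} (\<lambda>t. w (z + of_real \<rho> * exp(\<i> * of_real t))) / (2*pi))"
    and z: "z \<in> \<Omega>"
  shows "w z \<le> 0"
proof (rule ccontr)
  assume "\<not> w z \<le> 0"
  then have epos: "w z > 0" by simp
  define \<epsilon> where "\<epsilon> = w z"
  define K where "K = {x\<in>\<Omega>. w x \<ge> \<epsilon>}"
  have "closed K"
    unfolding closed_sequential_limits
  proof (intro allI impI, elim conjE)
    fix x l assume xK: "\<forall>n. x n \<in> K" and xl: "x \<longlonglongrightarrow> l"
    have xO: "x n \<in> \<Omega>" and xe: "w (x n) \<ge> \<epsilon>" for n using xK by (auto simp: K_def)
    have lc: "l \<in> closure \<Omega>"
      using xO xl closure_sequential by blast
    show "l \<in> K"
    proof (cases "l \<in> \<Omega>")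
      case True
      have "isCont w l" using cw op True continuous_on_eq_continuous_at by blast
      then have "(\<lambda>n. w (x n)) \<longlonglongrightarrow> w l" using xl isCont_tendsto_compose by blast
      then have "w l \<ge> \<epsilon>" using xe by (meson LIMSEQ_le_const)
      then show ?thesis using True by (simp add: K_def)
    next
      case False
      then have "l \<in> frontier \<Omega>" using lc op by (simp add: frontier_def interior_open)
      from bd[OF this] epos obtain d where d: "d > 0" "\<forall>z\<in>\<Omega>. dist z l < d \<longrightarrow> w z < \<epsilon>"
        unfolding \<epsilon>_def by blast
      from xl d(1) obtain N where "\<forall>n\<ge>N. dist (x n) l < d"
        using LIMSEQ_iff_nz dist_norm by (metis lim_sequentially)
      then have "w (x N) < \<epsilon>" using d xO by blast
      with xe show ?thesis by (meson not_le)
    qed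
  qed
  moreover have "bounded K" using bdd by (rule bounded_subset) (auto simp: K_def)
  ultimately have cK: "compact K" by (simp add: compact_eq_bounded_closed)
  have zK: "z \<in> K" using z by (simp add: K_def \<epsilon>_def)
  have cwK: "continuous_on K w" using cw by (rule continuous_on_subset) (auto simp: K_def)
  obtain z2 where z2: "z2 \<in> K" "\<forall>y\<in>K. w y \<le> w z2"
    using continuous_attains_sup[OF cK _ cwK] zK by blast
  define M where "M = w z2"
  have "w z \<le> w z2" using z2(2) zK by blast
  then have eM: "\<epsilon> \<le> M" by (simp add: M_def \<epsilon>_def)
  define S where "S = {x\<in>K. w x = M}"
  have "closed S" unfolding S_def
    by (rule continuous_closed_preimage_constant[OF cwK \<open>closed K\<close>])
  then have cS: "compact S" using cK S_def compact_Int_closed[OF cK, of "{x. w x = M}"]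
    by (metis \<open>closed K\<close> compact_eq_bounded_closed \<open>bounded K\<close> bounded_subset mem_Collect_eq subsetI)
  have "S \<noteq> {}" using z2 by (auto simp: S_def M_def)
  then obtain z3 where z3: "z3 \<in> S" "\<forall>y\<in>S. Im y \<le> Im z3"
    using continuous_attains_sup[OF cS, of Im] continuous_on_Im continuous_on_id by blast
  have z3O: "z3 \<in> \<Omega>" and wz3: "w z3 = M" using z3 by (auto simp: S_def K_def)
  obtain r0 where r0: "r0 > 0" "cball z3 r0 \<subseteq> \<Omega>"
    "\<forall>\<rho>. 0 < \<rho> \<and> \<rho> < r0 \<longrightarrow> w z3 \<le> integral {0..2*pi} (\<lambda>t. w (z3 + of_real \<rho> * exp(\<i> * of_real t))) / (2*pi)"
    using sm[OF z3O] by blast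
  define \<rho> where "\<rho> = r0 / 2"
  have \<rho>: "0 < \<rho>" "\<rho> < r0" using r0 by (auto simp: \<rho>_def)
  define c where "c = (\<lambda>t::real. z3 + of_real \<rho> * exp(\<i> * of_real t))"
  have cO: "c t \<in> \<Omega>" for t
  proof -
    have "dist z3 (c t) = \<rho>" using \<rho> by (simp add: c_def dist_norm norm_mult)
    then show ?thesis using r0 \<rho> by (auto simp: cball_def)
  qed
  have wcM: "w (c t) \<le> M" for t
  proof (cases "w (c t) \<ge> \<epsilon>")
    case True then have "c t \<in> K" using cO by (simp add: K_def)
    then show ?thesis using z2 by (simp add: M_def)
  next
    case False then show ?thesis using eM by simp
  qed
  have cc: "continuous_on {0..2*pi} (\<lambda>t. w (c t))"
  proof (rule continuous_on_compose2[OF cw])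
    show "continuous_on {0..2*pi} c" unfolding c_def by (intro continuous_intros)
    show "c ` {0..2*pi} \<subseteq> \<Omega>" using cO by auto
  qed
  have int: "(\<lambda>t. w (c t)) integrable_on {0..2*pi}"
    using cc integrable_continuous_real by blast
  define I where "I = integral {0..2*pi} (\<lambda>t. w (c t))"
  have "M \<le> I / (2*pi)" using r0(3) \<rho> wz3 by (simp add: I_def c_def)
  then have IM: "2*pi*M \<le> I" by (simp add: field_simps)
  define f' where "f' = (\<lambda>t. M - w (c t))"
  have hf: "(f' has_integral (2*pi*M - I)) {0..2*pi}"
  proof -
    have a: "((\<lambda>t. M) has_integral (2*pi*M)) {0..2*pi}"
      using has_integral_const_real[of M 0 "2*pi"] by simp
    have b: "((\<lambda>t. w (c t)) has_integral I) {0..2*pi}"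
      using int unfolding I_def by (rule integrable_integral)
    show ?thesis unfolding f'_def using has_integral_diff[OF a b] by simp
  qed
  have "0 \<le> 2*pi*M - I"
    using has_integral_nonneg[OF hf] wcM by (simp add: f'_def)
  with IM have "2*pi*M - I = 0" by simp
  with hf have hf0: "(f' has_integral 0) (cbox 0 (2*pi))" by simp
  have "f' (pi/2) = 0"
  proof (rule has_integral_0_cbox_imp_0[OF _ _ hf0])
    show "continuous_on (cbox 0 (2 * pi)) f'" unfolding f'_def using cc
      by (intro continuous_intros) auto
    show "\<And>x. x \<in> box 0 (2 * pi) \<Longrightarrow> 0 \<le> f' x" using wcM by (simp add: f'_def)
    show "box 0 (2 * pi) \<noteq> ({}::real set)" using pi_gt_zero by (simp add: not_le)
    show "pi / 2 \<in> cbox 0 (2 * pi)" by simp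
  qed
  then have wM: "w (c (pi/2)) = M" by (simp add: f'_def)
  have ci: "c (pi/2) = z3 + \<i> * of_real \<rho>"
  proof -
    have "exp (\<i> * of_real (pi/2)) = \<i>"
      by (simp add: exp_eq_polar complex_eq_iff)
    then show ?thesis by (simp add: c_def mult.commute)
  qed
  have "c (pi/2) \<in> S" using wM cO eM by (simp add: S_def K_def)
  then have "Im (c (pi/2)) \<le> Im z3" using z3 by blast
  then show False using \<rho> ci by simp
qed



definition qq :: "complex \<Rightarrow> complex" where "qq z = (z - 1) / (z + 1)"
definition om :: "complex \<Rightarrow> real" where "om z = Im (Ln (qq z)) / pi"

lemma qq_Re: "Im z > 0 \<Longrightarrow> Re (qq z) = ((Re z)^2 + (Im z)^2 - 1) / ((Re z + 1)^2 + (Im z)^2)"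
  by (simp add: qq_def Re_divide power2_eq_square algebra_simps)

lemma qq_Im: "Im z > 0 \<Longrightarrow> Im (qq z) = 2 * Im z / ((Re z + 1)^2 + (Im z)^2)"
  by (simp add: qq_def Im_divide power2_eq_square algebra_simps)

lemma qq_Im_pos: "Im z > 0 \<Longrightarrow> Im (qq z) > 0"
proof -
  assume a: "Im z > 0"
  have "(Re z + 1)^2 + (Im z)^2 > 0" using a by (simp add: add_nonneg_pos)
  then show ?thesis using a by (simp add: qq_Im)
qed

lemma om_bounds: "Im z > 0 \<Longrightarrow> 0 < om z \<and> om z < 1"
  using Im_Ln_pos_lt_imp[OF qq_Im_pos] by (simp add: om_def)

lemma om_half:
  assumes "Im z > 0" "(Re z)^2 + (Im z)^2 \<le> 1"
  shows "om z \<ge> 1/2"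
proof -
  have d: "(Re z + 1)^2 + (Im z)^2 > 0" using assms(1) by (simp add: add_nonneg_pos)
  have r: "Re (qq z) \<le> 0" using assms d by (simp add: qq_Re divide_nonpos_pos)
  have i: "Im (qq z) > 0" using qq_Im_pos assms by blast
  have nz: "qq z \<noteq> 0" using i by auto
  have "Im (Ln (qq z)) \<ge> pi/2"
  proof (cases "Re (qq z) = 0")
    case True then show ?thesis using Im_Ln_eq[OF nz] i by simp
  next
    case False
    then have rn: "Re (qq z) < 0" using r by simp
    have "Im (qq z) / Re (qq z) < 0" using rn i by (simp add: divide_pos_neg)
    have "arctan (Im (qq z) / Re (qq z)) > - (pi/2)" using arctan_bounded by blast
    then show ?thesis using Im_Ln_eq[OF nz] False rn i by simp
  qed
  then show ?thesis by (simp add: om_def field_simps)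
qed

lemma om_out:
  assumes "Im z > 0" "(Re z)^2 + (Im z)^2 > 1"
  shows "om z = arctan (2 * Im z / ((Re z)^2 + (Im z)^2 - 1)) / pi"
proof -
  have d: "(Re z + 1)^2 + (Im z)^2 > 0" using assms(1) by (simp add: add_nonneg_pos)
  have r: "Re (qq z) > 0" using assms d by (simp add: qq_Re)
  have nz: "qq z \<noteq> 0" using r by auto
  have e: "Im (qq z) / Re (qq z) = 2 * Im z / ((Re z)^2 + (Im z)^2 - 1)"
    using assms d by (simp add: qq_Re qq_Im)
  show ?thesis using Im_Ln_eq[OF nz] r e by (simp add: om_def)
qed

lemma qq_holo: "(\<lambda>z. Ln (qq z)) holomorphic_on {z. Im z > 0}"
proof (rule holomorphic_on_Ln')
  fix z assume "z \<in> {z. Im z > 0}"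
  then have "Im (qq z) > 0" using qq_Im_pos by simp
  then show "qq z \<notin> \<real>\<^sub>\<le>\<^sub>0" by (simp add: complex_nonpos_Reals_iff)
next
  have "z + 1 \<noteq> 0" if "z \<in> {z. Im z > 0}" for z
  proof
    assume "z + 1 = 0"
    then have "Im (z + 1) = 0" by simp
    then show False using that by simp
  qed
  then show "qq holomorphic_on {z. Im z > 0}" unfolding qq_def
    by (intro holomorphic_intros) blast
qed

lemma om_cont: "continuous_on {z. Im z > 0} om"
proof -
  have "continuous_on {z. Im z > 0} (\<lambda>z. Ln (qq z))"
    using qq_holo holomorphic_on_imp_continuous_on by blast
  then have "continuous_on {z. Im z > 0} (\<lambda>z. Im (Ln (qq z)))" by (rule continuous_on_Im)
  then have "continuous_on {z. Im z > 0} (\<lambda>z. Im (Ln (qq z)) / pi)"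
    by (rule continuous_on_divide[OF _ continuous_on_const]) simp
  then show ?thesis unfolding om_def .
qed




definition kap :: "real \<Rightarrow> real" where
  "kap a = arctan (2*((1+a)/2) / (((1+a)/2)^2 - 1)) / pi"

lemma kap_bounds: "a > 1 \<Longrightarrow> 0 < kap a \<and> kap a < 1/2"
proof -
  assume a: "a > 1"
  define s where "s = (1+a)/2"
  have s: "s > 1" using a by (simp add: s_def)
  have T: "2 * s/(s^2-1) > 0" proof -
    have "s^2 > 1" using s by (simp add: one_less_power)
    then show ?thesis using s by simp
  qed
  have "arctan (2 * s/(s^2-1)) > 0" using T by (simp add: zero_less_arctan_iff)
  moreover have "arctan (2 * s/(s^2-1)) < pi/2" using arctan_ubound by blast
  ultimately show ?thesis by (simp add: kap_def s_def[symmetric] field_simps)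
qed

lemma real_le_m:
  fixes g :: "complex \<Rightarrow> real"
  assumes cg: "isCont g \<xi>" and seg: "\<And>t. \<bar>t\<bar> < 1 \<Longrightarrow> g (of_real t) \<le> m"
    and xi: "Im \<xi> = 0" "\<bar>Re \<xi>\<bar> \<le> 1"
  shows "g \<xi> \<le> m"
proof -
  define x where "x = (\<lambda>n::nat. of_real ((1 - inverse (real (Suc n))) * Re \<xi>) :: complex)"
  have "(\<lambda>n. 1 - inverse (real (Suc n))) \<longlonglongrightarrow> 1 - 0"
    by (intro tendsto_intros LIMSEQ_inverse_real_of_nat)
  then have "(\<lambda>n. of_real ((1 - inverse (real (Suc n))) * Re \<xi>) :: complex) \<longlonglongrightarrow> of_real ((1 - 0) * Re \<xi>)"
    by (intro tendsto_intros LIMSEQ_inverse_real_of_nat)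
  moreover have "of_real ((1 - 0) * Re \<xi>) = \<xi>" using xi by (simp add: complex_eq_iff)
  ultimately have xl: "x \<longlonglongrightarrow> \<xi>" by (simp add: x_def)
  have "(\<lambda>n. g (x n)) \<longlonglongrightarrow> g \<xi>" using cg xl isCont_tendsto_compose by blast
  moreover have "g (x n) \<le> m" for n
  proof -
    have "\<bar>(1 - inverse (real (Suc n))) * Re \<xi>\<bar> < 1"
    proof -
      have "0 \<le> 1 - inverse (real (Suc n))" "1 - inverse (real (Suc n)) < 1" by (auto simp: field_simps)
      then have "\<bar>(1 - inverse (real (Suc n))) * Re \<xi>\<bar> = (1 - inverse (real (Suc n))) * \<bar>Re \<xi>\<bar>" by (simp add: abs_mult)
      also have "\<dots> < 1" using xi(2) \<open>1 - inverse (real (Suc n)) < 1\<close> \<open>0 \<le> 1 - inverse (real (Suc n))\<close>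
      proof -
        have "(1 - inverse (real (Suc n))) * \<bar>Re \<xi>\<bar> \<le> (1 - inverse (real (Suc n))) * 1"
          using xi(2) \<open>0 \<le> 1 - inverse (real (Suc n))\<close> by (rule mult_left_mono)
        then show ?thesis using \<open>1 - inverse (real (Suc n)) < 1\<close> by (metis mult.right_neutral order_le_less_trans)
      qed
      finally show ?thesis .
    qed
    then show ?thesis unfolding x_def by (rule seg)
  qed
  ultimately show ?thesis by (meson LIMSEQ_le_const2)
qed


lemma core:
  fixes g :: "complex \<Rightarrow> real"
  assumes a: "a > 1" and cg: "continuous_on (ball 0 a) g" and neg: "\<And>z. z \<in> ball 0 a \<Longrightarrow> g z \<le> 0"
    and sm: "\<And>z \<rho>. 0 < \<rho> \<Longrightarrow> cball z \<rho> \<subseteq> ball 0 a \<Longrightarrow>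
        g z \<le> integral {0..2*pi} (\<lambda>t. g (z + of_real \<rho> * exp(\<i> * of_real t))) / (2*pi)"
    and m: "m < 0" and seg: "\<And>t. \<bar>t\<bar> < 1 \<Longrightarrow> g (of_real t) \<le> m"
    and p: "norm p < 1" "Im p \<ge> 0"
  shows "g p \<le> m * (1/2 - kap a)"
proof -
  define s where "s = (1+a)/2"
  define T where "T = 2 * s/(s^2-1)"
  define \<kappa> where "\<kappa> = kap a"
  have s: "1 < s" "s < a" using a by (auto simp: s_def)
  have s2: "s^2 > 1" using s by (simp add: one_less_power)
  have Tpos: "T > 0" using s s2 by (simp add: T_def)
  have kapT: "\<kappa> = arctan T / pi" by (simp add: \<kappa>_def kap_def T_def s_def)
  have kb: "0 < \<kappa>" "\<kappa> < 1/2" using kap_bounds[OF a] by (auto simp: \<kappa>_def)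
  have gc: "\<And>z. z \<in> ball 0 a \<Longrightarrow> isCont g z"
    using cg continuous_on_eq_continuous_at open_ball by blast
  show ?thesis
  proof (cases "Im p = 0")
    case True
    then have "p = of_real (Re p)" by (simp add: complex_eq_iff)
    moreover have "\<bar>Re p\<bar> < 1" using p(1) abs_Re_le_cmod le_less_trans by blast
    ultimately have "g p \<le> m" using seg by metis
    moreover have "m \<le> m * (1/2 - \<kappa>)" using mult_left_mono_neg[of "1/2-\<kappa>" 1 m] m kb by simp
    ultimately show ?thesis by (simp add: \<kappa>_def)
  next
    case False
    then have pI: "Im p > 0" using p(2) by simp
    define U where "U = {z. Im z > 0}"
    define \<Omega> where "\<Omega> = {z. Im z > 0 \<and> om z > \<kappa>}"
    define w where "w = (\<lambda>z. g z + (-m) * (om z - \<kappa>))"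
    define F where "F = {z. Im z \<ge> 0 \<and> (Re z)^2 + (Im z)^2 - 1 \<le> 2 * Im z / T}"
    have \<Omega>F: "\<Omega> \<subseteq> F"
    proof
      fix z assume "z \<in> \<Omega>"
      then have zi: "Im z > 0" and zo: "om z > \<kappa>" by (auto simp: \<Omega>_def)
      show "z \<in> F"
      proof (cases "(Re z)^2 + (Im z)^2 > 1")
        case True
        have "arctan T / pi < arctan (2 * Im z / ((Re z)^2 + (Im z)^2 - 1)) / pi"
          using zo om_out[OF zi True] kapT by simp
        then have "arctan T < arctan (2 * Im z / ((Re z)^2 + (Im z)^2 - 1))"
          using pi_gt_zero by (simp add: divide_less_cancel)
        then have "T < 2 * Im z / ((Re z)^2 + (Im z)^2 - 1)" by (simp add: arctan_less_iff)
        then have "T * ((Re z)^2 + (Im z)^2 - 1) < 2 * Im z" using True by (simp add: field_simps)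
        then show ?thesis using Tpos zi by (simp add: F_def field_simps)
      next
        case False
        have "0 \<le> 2 * Im z / T" using zi Tpos by simp
        then show ?thesis using zi False by (simp add: F_def)
      qed
    qed
    have Fs: "F \<subseteq> cball 0 s"
    proof
      fix z assume "z \<in> F"
      then have zi: "Im z \<ge> 0" and zf: "(Re z)^2 + (Im z)^2 - 1 \<le> 2 * Im z / T" by (auto simp: F_def)
      define r where "r = norm z"
      have r0: "r \<ge> 0" by (simp add: r_def)
      have r2: "r^2 = (Re z)^2 + (Im z)^2" by (simp add: r_def cmod_power2)
      have "Im z \<le> r" unfolding r_def using abs_Im_le_cmod[of z] by linarith
      then have "2 * Im z / T \<le> 2 * r / T" using Tpos by (simp add: divide_right_mono)
      then have "r^2 - 1 \<le> 2 * r / T" using zf r2 by linarith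
      then have "r^2 - 1 \<le> r * (s^2-1) / s" using s by (simp add: T_def field_simps)
      then have "s * (r^2 - 1) \<le> r * (s^2-1)" using s by (simp add: field_simps)
      then have "(r - s) * (s*r + 1) \<le> 0" by (simp add: algebra_simps power2_eq_square)
      moreover have "s*r + 1 > 0" using s r0 by (simp add: add_nonneg_pos)
      ultimately have "r \<le> s" by (simp add: mult_le_0_iff)
      then show "z \<in> cball 0 s" by (simp add: r_def)
    qed
    have closedF: "closed F" unfolding F_def
      using Tpos by (intro closed_Collect_conj closed_Collect_le continuous_intros) auto
    have sa: "cball 0 s \<subseteq> ball 0 a" using s by auto
    have \<Omega>U: "\<Omega> \<subseteq> U" by (auto simp: \<Omega>_def U_def)
    have openU: "open U" unfolding U_def by (rule open_halfspace_Im_gt)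
    have omc: "continuous_on U om" unfolding U_def by (rule om_cont)
    have open\<Omega>: "open \<Omega>"
    proof -
      have "open (U \<inter> om -` {\<kappa><..})" using continuous_open_preimage[OF omc openU] by simp
      moreover have "U \<inter> om -` {\<kappa><..} = \<Omega>" by (auto simp: U_def \<Omega>_def)
      ultimately show ?thesis by simp
    qed
    have bdd\<Omega>: "bounded \<Omega>" using \<Omega>F Fs bounded_cball bounded_subset by blast
    have \<Omega>a: "\<Omega> \<subseteq> ball 0 a" using \<Omega>F Fs sa by blast
    have cw: "continuous_on \<Omega> w" unfolding w_def
      using continuous_on_subset[OF cg \<Omega>a] continuous_on_subset[OF omc \<Omega>U]
      by (intro continuous_intros) auto
    have bd: "\<exists>d>0. \<forall>z\<in>\<Omega>. dist z \<xi> < d \<longrightarrow> w z < \<epsilon>" if fr: "\<xi> \<in> frontier \<Omega>" and e: "\<epsilon> > 0" for \<xi> \<epsilon>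
    proof -
      have xc: "\<xi> \<in> closure \<Omega>" and xn: "\<xi> \<notin> \<Omega>" using fr open\<Omega> by (auto simp: frontier_def interior_open)
      have xF: "\<xi> \<in> F" using closure_minimal[OF \<Omega>F closedF] xc by blast
      have xa: "\<xi> \<in> ball 0 a" using xF Fs sa by blast
      show ?thesis
      proof (cases "Im \<xi> > 0")
        case True
        have "om \<xi> \<le> \<kappa>" using xn True by (auto simp: \<Omega>_def)
        then have "(-m) * (om \<xi> - \<kappa>) \<le> 0" using m by (simp add: mult_nonpos_nonpos)
        then have wx: "w \<xi> \<le> 0" using neg[OF xa] by (simp add: w_def)
        have "isCont om \<xi>" using omc openU True continuous_on_eq_continuous_at by (auto simp: U_def)
        then have "isCont w \<xi>" using gc[OF xa] unfolding w_def by (intro continuous_intros)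
        then obtain d where "d > 0" "\<forall>z. dist z \<xi> < d \<longrightarrow> dist (w z) (w \<xi>) < \<epsilon>"
          using e unfolding continuous_at_eps_delta by blast
        then show ?thesis using wx by (force simp: dist_real_def)
      next
        case False
        then have xi0: "Im \<xi> = 0" using xF by (simp add: F_def)
        then have "(Re \<xi>)^2 \<le> 1" using xF by (simp add: F_def)
        then have "\<bar>Re \<xi>\<bar> \<le> 1" by (simp add: abs_square_le_1)
        have gx: "g \<xi> \<le> m" using real_le_m[OF gc[OF xa] seg xi0 \<open>\<bar>Re \<xi>\<bar> \<le> 1\<close>] by blast
        have epos: "(-m) * \<kappa> > 0" using m kb by (simp add: mult_neg_pos)
        obtain d where d: "d > 0" "\<forall>z. dist z \<xi> < d \<longrightarrow> dist (g z) (g \<xi>) < (-m)*\<kappa>"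
          using gc[OF xa] epos unfolding continuous_at_eps_delta by blast
        show ?thesis
        proof (intro exI[of _ d] conjI ballI impI)
          show "d > 0" by (rule d(1))
          fix z assume zO: "z \<in> \<Omega>" and dz: "dist z \<xi> < d"
          have g1: "g z < g \<xi> + (-m)*\<kappa>" using d dz by (auto simp: dist_real_def)
          have "om z < 1" using om_bounds zO by (auto simp: \<Omega>_def)
          then have "(-m) * (om z - \<kappa>) \<le> (-m) * (1 - \<kappa>)" using m by (intro mult_left_mono) auto
          then have "w z < 0" using gx g1 unfolding w_def by (simp add: algebra_simps)
          then show "w z < \<epsilon>" using e by simp
        qed
      qed
    qed
    have smw: "\<exists>r0>0. cball z r0 \<subseteq> \<Omega> \<and> (\<forall>\<rho>. 0 < \<rho> \<and> \<rho> < r0 \<longrightarrow>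
         w z \<le> integral {0..2*pi} (\<lambda>t. w (z + of_real \<rho> * exp(\<i> * of_real t))) / (2*pi))"
      if zO: "z \<in> \<Omega>" for z
    proof -
      obtain r0 where r0: "r0 > 0" "cball z r0 \<subseteq> \<Omega>" using open\<Omega> zO open_contains_cball by blast
      show ?thesis
      proof (intro exI[of _ r0] conjI allI impI r0)
        fix \<rho> assume "0 < \<rho> \<and> \<rho> < r0"
        then have \<rho>: "0 < \<rho>" "\<rho> < r0" by auto
        have cbO: "cball z \<rho> \<subseteq> \<Omega>" using r0 \<rho> by (meson less_imp_le order_trans subset_cball)
        have cba: "cball z \<rho> \<subseteq> ball 0 a" using cbO \<Omega>a by blast
        have cbU: "cball z \<rho> \<subseteq> U" using cbO \<Omega>U by blast
        define c where "c = (\<lambda>t::real. z + of_real \<rho> * exp(\<i> * of_real t))"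
        have cin: "c t \<in> cball z \<rho>" for t using \<rho> by (simp add: c_def dist_norm norm_mult)
        have contc: "continuous_on {0..2*pi} c" unfolding c_def by (intro continuous_intros)
        have "continuous_on {0..2*pi} (\<lambda>t. g (c t))"
          using continuous_on_compose2[OF cg contc] cin cba by blast
        then have gint: "((\<lambda>t. g (c t)) has_integral integral {0..2*pi} (\<lambda>t. g (c t))) {0..2*pi}"
          using integrable_continuous_real integrable_integral by blast
        have hol: "(\<lambda>z. Ln (qq z)) holomorphic_on cball z \<rho>"
          using qq_holo cbU holomorphic_on_subset unfolding U_def by blast
        have mv: "((\<lambda>t. Ln (qq (c t))) has_integral (2*pi) *\<^sub>R Ln (qq z)) {0..2*pi}"
          using mean_value_holo[OF hol \<rho>(1)] by (simp add: c_def)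
        have mvI: "((\<lambda>t. Im (Ln (qq (c t)))) has_integral (2*pi) * Im (Ln (qq z))) {0..2*pi}"
          using has_integral_linear[OF mv bounded_linear_Im] by (simp add: o_def)
        have mvo: "((\<lambda>t. om (c t)) has_integral (2*pi) * om z) {0..2*pi}"
          using has_integral_mult_left[OF mvI, of "1/pi"] by (simp add: om_def)
        have mvo2: "((\<lambda>t. (-m) * om (c t)) has_integral (-m) * ((2*pi) * om z)) {0..2*pi}"
          by (rule has_integral_mult_right[OF mvo])
        have cst: "((\<lambda>t. (-m) * \<kappa>) has_integral (2*pi) * ((-m) * \<kappa>)) {0..2*pi}"
          using has_integral_const_real[of "(-m) * \<kappa>" 0 "2*pi"] by simp
        have wint: "((\<lambda>t. w (c t)) has_integral
           (integral {0..2*pi} (\<lambda>t. g (c t)) + (-m) * ((2*pi) * om z) - (2*pi) * ((-m) * \<kappa>))) {0..2*pi}"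
          using has_integral_diff[OF has_integral_add[OF gint mvo2] cst]
          by (simp add: w_def algebra_simps)
        have eq: "integral {0..2*pi} (\<lambda>t. w (c t)) / (2*pi) =
           integral {0..2*pi} (\<lambda>t. g (c t)) / (2*pi) + (-m) * (om z - \<kappa>)"
          using integral_unique[OF wint] pi_gt_zero by (simp add: field_simps)
        have "g z \<le> integral {0..2*pi} (\<lambda>t. g (c t)) / (2*pi)"
          using sm[OF \<rho>(1) cba] by (simp add: c_def)
        then have "w z \<le> integral {0..2*pi} (\<lambda>t. w (c t)) / (2*pi)"
          using eq by (simp add: w_def)
        then show "w z \<le> integral {0..2*pi} (\<lambda>t. w (z + of_real \<rho> * exp(\<i> * of_real t))) / (2*pi)"
          by (simp add: c_def)
      qed
    qed
    have "(Re p)^2 + (Im p)^2 \<le> 1"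
    proof -
      have "(norm p)^2 \<le> 1" using p(1) by (simp add: power_le_one)
      then show ?thesis by (simp add: cmod_power2)
    qed
    then have omp: "om p \<ge> 1/2" using om_half[OF pI] by blast
    then have pO: "p \<in> \<Omega>" using pI kb by (simp add: \<Omega>_def)
    have "w p \<le> 0" by (rule max_principle[OF open\<Omega> bdd\<Omega> cw bd smw pO])
    then have "g p \<le> m * (om p - \<kappa>)" by (simp add: w_def algebra_simps)
    also have "\<dots> \<le> m * (1/2 - \<kappa>)" using omp m by (intro mult_left_mono_neg) auto
    finally show ?thesis by (simp add: \<kappa>_def)
  qed
qed



lemma norm_sq_vec: "(norm (v::complex^'n))^2 = (\<Sum>i\<in>UNIV. (Re (v$i))^2 + (Im (v$i))^2)"
proof -
  have "(norm v)^2 = (\<Sum>i\<in>UNIV. (cmod (v$i))^2)"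
    unfolding norm_vec_def L2_set_def by (simp add: sum_nonneg)
  then show ?thesis by (simp add: cmod_power2)
qed

lemma norm_line:
  fixes b e :: "'n::finite \<Rightarrow> real"
  assumes be: "(\<Sum>i\<in>UNIV. b i * e i) = 0" and ee: "(\<Sum>i\<in>UNIV. (e i)^2) = 1"
  shows "(norm ((\<chi> i. of_real (b i) + \<xi> * of_real (k * e i)) :: complex^'n))^2
       = (\<Sum>i\<in>UNIV. (b i)^2) + k^2 * (cmod \<xi>)^2"
proof -
  have "(norm ((\<chi> i. of_real (b i) + \<xi> * of_real (k * e i)) :: complex^'n))^2
     = (\<Sum>i\<in>UNIV. (b i + Re \<xi> * (k * e i))^2 + (Im \<xi> * (k * e i))^2)"
    unfolding norm_sq_vec by simp
  also have "\<dots> = (\<Sum>i\<in>UNIV. (b i)^2 + (2 * k * Re \<xi>) * (b i * e i) + (k^2 * ((Re \<xi>)^2 + (Im \<xi>)^2)) * (e i)^2)"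
    by (rule sum.cong) (auto simp: power2_eq_square algebra_simps)
  also have "\<dots> = (\<Sum>i\<in>UNIV. (b i)^2) + (2 * k * Re \<xi>) * (\<Sum>i\<in>UNIV. b i * e i)
      + (k^2 * ((Re \<xi>)^2 + (Im \<xi>)^2)) * (\<Sum>i\<in>UNIV. (e i)^2)"
    by (simp add: sum.distrib sum_distrib_left)
  also have "\<dots> = (\<Sum>i\<in>UNIV. (b i)^2) + k^2 * (cmod \<xi>)^2"
    using be ee by (simp add: cmod_power2)
  finally show ?thesis .
qed


lemma reduce:
  fixes f :: "complex^'n \<Rightarrow> real" and z0 :: "complex^'n"
  assumes a: "a > 1" and psh: "cont_psh_on (ball 0 a) f" and neg: "\<And>z. z \<in> ball 0 a \<Longrightarrow> f z \<le> 0"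
    and z0: "z0 \<in> ball 0 1" and m: "m < 0"
    and rp: "\<And>x. x \<in> ball 0 1 \<inter> real_points \<Longrightarrow> f x \<le> m"
  shows "f z0 \<le> m * (1/2 - kap a)"
proof -
  have kb: "0 < kap a" "kap a < 1/2" using kap_bounds[OF a] by auto
  have mm: "m \<le> m * (1/2 - kap a)" using mult_left_mono_neg[of "1/2 - kap a" 1 m] m kb by simp
  define X where "X = (\<lambda>i. Re (z0$i))"
  define Y where "Y = (\<lambda>i. Im (z0$i))"
  define ny where "ny = sqrt (\<Sum>i\<in>UNIV. (Y i)^2)"
  have Ynn: "(\<Sum>i\<in>UNIV. (Y i)^2) \<ge> 0" by (simp add: sum_nonneg)
  have ny2: "ny^2 = (\<Sum>i\<in>UNIV. (Y i)^2)" using Ynn by (simp add: ny_def)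
  have nz: "(norm z0)^2 = (\<Sum>i\<in>UNIV. (X i)^2) + (\<Sum>i\<in>UNIV. (Y i)^2)"
    by (simp add: norm_sq_vec X_def Y_def sum.distrib)
  have z0n: "(norm z0)^2 < 1"
  proof -
    have "norm z0 < 1" using z0 by simp
    then show ?thesis by (simp add: power_less_one_iff abs_less_iff)
  qed
  show ?thesis
  proof (cases "ny = 0")
    case True
    then have "(\<Sum>i\<in>UNIV. (Y i)^2) = 0" using ny2 by simp
    then have "\<forall>i\<in>UNIV. (Y i)^2 = 0" using sum_nonneg_eq_0_iff[of UNIV "\<lambda>i. (Y i)^2"] by simp
    then have "z0 \<in> real_points" by (simp add: real_points_def Y_def)
    then have "f z0 \<le> m" using rp z0 by blast
    then show ?thesis using mm by linarith
  next
    case False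
    have nyp: "ny > 0" using False Ynn by (simp add: ny_def)
    define e where "e = (\<lambda>i. Y i / ny)"
    have ee: "(\<Sum>i\<in>UNIV. (e i)^2) = 1"
    proof -
      have "(\<Sum>i\<in>UNIV. (e i)^2) = (\<Sum>i\<in>UNIV. (Y i)^2) / ny^2"
        by (simp add: e_def power_divide sum_divide_distrib)
      then show ?thesis using ny2 nyp by (metis divide_self less_numeral_extra(3) zero_less_power)
    qed
    define xe where "xe = (\<Sum>i\<in>UNIV. X i * e i)"
    define b where "b = (\<lambda>i. X i - xe * e i)"
    have be: "(\<Sum>i\<in>UNIV. b i * e i) = 0"
    proof -
      have "(\<Sum>i\<in>UNIV. b i * e i) = (\<Sum>i\<in>UNIV. X i * e i) - xe * (\<Sum>i\<in>UNIV. (e i)^2)"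
        by (simp add: b_def algebra_simps sum_subtractf sum_distrib_left power2_eq_square)
      then show ?thesis using ee by (simp add: xe_def)
    qed
    define nb2 where "nb2 = (\<Sum>i\<in>UNIV. (b i)^2)"
    have bb: "nb2 = (\<Sum>i\<in>UNIV. (X i)^2) - xe^2"
    proof -
      have "nb2 = (\<Sum>i\<in>UNIV. (X i)^2 - (2*xe) * (X i * e i) + xe^2 * (e i)^2)"
        unfolding nb2_def b_def by (rule sum.cong) (auto simp: power2_eq_square algebra_simps)
      also have "\<dots> = (\<Sum>i\<in>UNIV. (X i)^2) - (2*xe) * (\<Sum>i\<in>UNIV. X i * e i) + xe^2 * (\<Sum>i\<in>UNIV. (e i)^2)"
        by (simp add: sum.distrib sum_subtractf sum_distrib_left)
      finally show ?thesis using ee by (simp add: xe_def power2_eq_square)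
    qed
    have nb0: "nb2 \<ge> 0" by (simp add: nb2_def sum_nonneg)
    have tot: "nb2 + xe^2 + ny^2 < 1" using nz z0n bb ny2 by linarith
    have nb1: "nb2 < 1" using tot by (smt (verit) zero_le_power2)
    define \<rho> where "\<rho> = sqrt (1 - nb2)"
    have \<rho>p: "\<rho> > 0" using nb1 by (simp add: \<rho>_def)
    have \<rho>2: "\<rho>^2 = 1 - nb2" using nb1 by (simp add: \<rho>_def)
    define E where "E = (\<lambda>\<xi>. (\<chi> i. of_real (b i) + \<xi> * of_real (\<rho> * e i)) :: complex^'n)"
    have En: "(norm (E \<xi>))^2 = nb2 + \<rho>^2 * (cmod \<xi>)^2" for \<xi>
      using norm_line[OF be ee, of \<xi> \<rho>] by (simp add: E_def nb2_def)
    have Eball: "E \<xi> \<in> ball 0 a" if "cmod \<xi> < a" for \<xi>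
    proof -
      have "(cmod \<xi>)^2 < a^2" using that by (simp add: power_strict_mono)
      then have "\<rho>^2 * (cmod \<xi>)^2 < \<rho>^2 * a^2" using \<rho>p by simp
      moreover have "nb2 \<le> nb2 * a^2" using nb0 a by (simp add: mult_le_cancel_left1 one_le_power)
      moreover have "\<rho>^2 * a^2 = a^2 - nb2 * a^2" unfolding \<rho>2 by (simp add: algebra_simps)
      ultimately have "(norm (E \<xi>))^2 < a^2" using En[of \<xi>] by linarith
      then have "norm (E \<xi>) < a" using a by (smt (verit) power2_less_imp_less)
      then show ?thesis by simp
    qed
    have contE: "continuous_on S E" for S unfolding E_def by (intro continuous_intros)
    have op: "open (ball 0 a)" and cf: "continuous_on (ball 0 a) f"
      and smf: "\<And>z w. (\<forall>u::complex. norm u \<le> 1 \<longrightarrow> z + u *s w \<in> ball 0 a) \<Longrightarrow>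
        f z \<le> integral {0..2*pi} (\<lambda>t. f (z + exp (\<i> * of_real t) *s w)) / (2*pi)"
      using psh unfolding cont_psh_on_def by blast+
    define g where "g = (\<lambda>\<xi>. f (E \<xi>))"
    have cg: "continuous_on (ball 0 a) g" unfolding g_def
    proof (rule continuous_on_compose2[OF cf contE])
      show "E ` ball 0 a \<subseteq> ball 0 a" using Eball by auto
    qed
    have negg: "g \<xi> \<le> 0" if "\<xi> \<in> ball 0 a" for \<xi> using neg Eball that by (simp add: g_def)
    have smg: "g z \<le> integral {0..2*pi} (\<lambda>t. g (z + of_real r * exp(\<i> * of_real t))) / (2*pi)"
      if r: "0 < r" and cb: "cball z r \<subseteq> ball 0 a" for z r
    proof -
      define W where "W = ((\<chi> i. of_real (r * \<rho> * e i)) :: complex^'n)"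
      have EW: "E z + u *s W = E (z + u * of_real r)" for u
        by (simp add: vec_eq_iff E_def W_def algebra_simps)
      have "\<forall>u::complex. norm u \<le> 1 \<longrightarrow> E z + u *s W \<in> ball 0 a"
      proof (intro allI impI)
        fix u :: complex assume "norm u \<le> 1"
        then have "dist z (z + u * of_real r) \<le> r" using r by (simp add: dist_norm norm_mult mult_le_cancel_right1)
        then have "z + u * of_real r \<in> ball 0 a" using cb by auto
        then show "E z + u *s W \<in> ball 0 a" unfolding EW using Eball by simp
      qed
      from smf[OF this] show ?thesis unfolding EW g_def by (simp add: mult.commute)
    qed
    have seg: "g (of_real t) \<le> m" if "\<bar>t\<bar> < 1" for t
    proof -
      have "E (of_real t) \<in> real_points" by (simp add: E_def real_points_def)
      moreover have "(norm (E (of_real t)))^2 < 1"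
      proof -
        have "t^2 < 1" using that by (simp add: abs_square_less_1)
        then have "\<rho>^2 * t^2 < \<rho>^2" using \<rho>p by simp
        then show ?thesis using En[of "of_real t"] \<rho>2 by simp
      qed
      then have "norm (E (of_real t)) < 1" by (smt (verit) norm_ge_zero power_less_one_iff)
      ultimately show ?thesis using rp by (simp add: g_def)
    qed
    define p where "p = Complex (xe/\<rho>) (ny/\<rho>)"
    have Ep: "E p = z0"
    proof (subst vec_eq_iff, intro allI)
      fix i
      have "Re (E p $ i) = X i" using \<rho>p by (simp add: E_def p_def b_def)
      moreover have "Im (E p $ i) = Y i" using \<rho>p nyp by (simp add: E_def p_def e_def)
      ultimately show "E p $ i = z0 $ i" by (simp add: complex_eq_iff X_def Y_def)
    qed
    have pn: "cmod p < 1"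
    proof -
      have "(cmod p)^2 = (xe^2 + ny^2) / \<rho>^2" by (simp add: p_def cmod_power2 power_divide add_divide_distrib)
      also have "\<dots> < 1" using tot \<rho>2 nb1 by (simp add: divide_less_eq)
      finally show ?thesis by (smt (verit) norm_ge_zero power_less_one_iff)
    qed
    have pI: "Im p \<ge> 0" using \<rho>p nyp by (simp add: p_def)
    have "g p \<le> m * (1/2 - kap a)" by (rule core[OF a cg negg smg m seg pn pI])
    then show ?thesis using Ep by (simp add: g_def)
  qed
qed


theorem lemma2p7:
  fixes a c :: real
  assumes "a > 1" and "c > 0"
  shows "\<exists>C>0. \<forall>f \<in> (R_family c a :: (complex^'n \<Rightarrow> real) set).
           (SUP x\<in>ball 0 1 \<inter> real_points. ereal (f x)) \<ge> ereal (- C)"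
proof -
  have a: "a > 1" and c: "c > 0" using assms by auto
  define A where "A = c * ln a + 1"
  define C where "C = A / (1/2 - kap a)"
  have kb: "0 < kap a" "kap a < 1/2" using kap_bounds[OF a] by auto
  have "ln a > 0" using a by simp
  then have Ap: "A > 0" using c by (simp add: A_def add_pos_pos)
  have Cp: "C > 0" using Ap kb by (simp add: C_def)
  have CA: "(-C) * (1/2 - kap a) = -A" using kb by (simp add: C_def)
  show ?thesis
  proof (intro exI[of _ C] conjI ballI)
    show "C > 0" by (rule Cp)
    fix f :: "complex^'n \<Rightarrow> real" assume fR: "f \<in> R_family c a"
    then have psh: "cont_psh_on (ball 0 a) f" and sup0: "(SUP z\<in>ball 0 a. ereal (f z)) = 0"
      and sup1: "(SUP z\<in>ball 0 1. ereal (f z)) \<ge> ereal (- c * ln a)"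
      by (auto simp: R_family_def)
    have neg: "f z \<le> 0" if "z \<in> ball 0 a" for z
    proof -
      have "ereal (f z) \<le> (SUP z\<in>ball 0 a. ereal (f z))" using that by (rule SUP_upper)
      then show ?thesis using sup0 by simp
    qed
    have "ereal (-A) < ereal (- c * ln a)" by (simp add: A_def)
    then have "ereal (-A) < (SUP z\<in>ball 0 1. ereal (f z))" using sup1 by (rule less_le_trans)
    then obtain z0 where z0: "z0 \<in> ball 0 1" and fz0: "ereal (-A) < ereal (f z0)"
      by (auto simp: less_SUP_iff)
    show "(SUP x\<in>ball 0 1 \<inter> real_points. ereal (f x)) \<ge> ereal (- C)"
    proof (rule ccontr)
      assume "\<not> (SUP x\<in>ball 0 1 \<inter> real_points. ereal (f x)) \<ge> ereal (- C)"
      then have lt: "(SUP x\<in>ball 0 1 \<inter> real_points. ereal (f x)) < ereal (- C)" by simp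
      have rp: "f x \<le> -C" if "x \<in> ball 0 1 \<inter> real_points" for x
      proof -
        have "ereal (f x) \<le> (SUP x\<in>ball 0 1 \<inter> real_points. ereal (f x))" using that by (rule SUP_upper)
        then have "ereal (f x) < ereal (-C)" using lt by (rule le_less_trans)
        then show ?thesis by simp
      qed
      have mC: "-C < 0" using Cp by linarith
      have "f z0 \<le> (-C) * (1/2 - kap a)"
        by (rule reduce[OF a psh neg z0 mC rp])
      then show False using CA fz0 by simp
    qed
  qed
qed


end
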